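(* Let $(X,d)$ be a compact metric space and $f\colon X\to X$ a continuous map that is c-expansive or equicontinuous. (1) If $f$ has the limit shadowing property, then $f|_{\Omega(f)}\colon\Omega(f)\to\Omega(f)$ also has the limit shadowing property. (2) $f$ has the limit shadowing property if and only if $f$ has the thick shadowing property.
   Context: For a continuous surjection $f$, let $X_f=\{(x_i)_{i\in\mathbb{Z}}\in X^{\mathbb{Z}}: f(x_i)=x_{i+1}\ \forall i\}$; $f$ is c-expansive if there is $e>0$ such that for $(x_i),(y_i)\in X_f$, $d(x_i,y_i)\le e$ for all $i$ implies $(x_i)=(y_i)$. $f$ is equicontinuous if for every $\epsilon>0$ there is $\delta>0$ such that $d(x,y)\le\delta$ implies $\sup_{n\ge0}d(f^n(x),f^n(y))\le\epsilon$. Limit shadowing property: every sequence $(x_i)_{i\ge0}$ with $\lim_i d(f(x_i),x_{i+1})=0$ admits $y\in X$ with $\lim_i d(x_i,f^i(y))=0$. $\Omega(f)$ is the set of non-wandering points. Let $\mathbb{N}_0=\{0,1,\dots\}$, $\mathcal{D}=\{A\subset\mathbb{N}_0:\lim_n\frac1n|A\cap\{0,\dots,n-1\}|=1\}$, $\mathcal{F}_t=\{B\subset\mathbb{N}_0:\forall n\ \exists j,\ \{j,\dots,j+n\}\subset B\}$. $f$ has the thick shadowing property if for every $\epsilon>0$ there is $\delta>0$ such that every sequence $(x_i)_{i\ge0}$ with $\{i:d(f(x_i),x_{i+1})\le\delta\}\in\mathcal{D}$ admits $x\in X$ with $\{i:d(x_i,f^i(x))\le\epsilon\}\in\mathcal{F}_t$.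 *)

theory Defs
  imports "HOL-Analysis.Analysis"
begin

text \<open>All dynamical notions are taken relative to a set X (the phase space) on which
  f acts; this allows restricting f to the invariant subset of non-wandering points.\<close>

definition full_orbits :: "'a set \<Rightarrow> ('a \<Rightarrow> 'a) \<Rightarrow> (int \<Rightarrow> 'a) set" where
  "full_orbits X f = {x. (\<forall>i. x i \<in> X) \<and> (\<forall>i. f (x i) = x (i + 1))}"

definition c_expansive :: "'a::metric_space set \<Rightarrow> ('a \<Rightarrow> 'a) \<Rightarrow> bool" where
  "c_expansive X f \<longleftrightarrow> (\<exists>e>0. \<forall>x\<in>full_orbits X f. \<forall>y\<in>full_orbits X f.
      (\<forall>i. dist (x i) (y i) \<le> e) \<longrightarrow> x = y)"

definition equicontinuous :: "'a::metric_space set \<Rightarrow> ('a \<Rightarrow> 'a) \<Rightarrow> bool" where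
  "equicontinuous X f \<longleftrightarrow> (\<forall>\<epsilon>>0. \<exists>\<delta>>0. \<forall>x\<in>X. \<forall>y\<in>X.
      dist x y \<le> \<delta> \<longrightarrow> (\<forall>n. dist ((f ^^ n) x) ((f ^^ n) y) \<le> \<epsilon>))"

definition limit_shadowing :: "'a::metric_space set \<Rightarrow> ('a \<Rightarrow> 'a) \<Rightarrow> bool" where
  "limit_shadowing X f \<longleftrightarrow> (\<forall>x :: nat \<Rightarrow> 'a. (\<forall>i. x i \<in> X) \<and>
      (\<lambda>i. dist (f (x i)) (x (Suc i))) \<longlonglongrightarrow> 0 \<longrightarrow>
      (\<exists>y\<in>X. (\<lambda>i. dist (x i) ((f ^^ i) y)) \<longlonglongrightarrow> 0))"

definition nonwandering :: "'a::metric_space set \<Rightarrow> ('a \<Rightarrow> 'a) \<Rightarrow> 'a set" where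
  "nonwandering X f = {x\<in>X. \<forall>U. openin (top_of_set X) U \<and> x \<in> U \<longrightarrow>
      (\<exists>n\<ge>1. (f ^^ n) ` U \<inter> U \<noteq> {})}"

definition density_one :: "nat set \<Rightarrow> bool" where
  "density_one A \<longleftrightarrow> (\<lambda>n. real (card (A \<inter> {..<n})) / real n) \<longlonglongrightarrow> 1"

definition thick :: "nat set \<Rightarrow> bool" where
  "thick B \<longleftrightarrow> (\<forall>n. \<exists>j. {j..j+n} \<subseteq> B)"

definition thick_shadowing :: "'a::metric_space set \<Rightarrow> ('a \<Rightarrow> 'a) \<Rightarrow> bool" where
  "thick_shadowing X f \<longleftrightarrow> (\<forall>\<epsilon>>0. \<exists>\<delta>>0. \<forall>x :: nat \<Rightarrow> 'a. (\<forall>i. x i \<in> X) \<and>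
      density_one {i. dist (f (x i)) (x (Suc i)) \<le> \<delta>} \<longrightarrow>
      (\<exists>z\<in>X. thick {i. dist (x i) ((f ^^ i) z) \<le> \<epsilon>}))"

end

theory Submission
  imports Defs "HOL-Library.Diagonal_Subsequence" "HOL-Library.Nat_Bijection"
begin


definition PS :: "'a::metric_space set \<Rightarrow> ('a\<Rightarrow>'a) \<Rightarrow> real \<Rightarrow> real \<Rightarrow> bool" where
"PS X f \<epsilon> \<delta> \<longleftrightarrow> (\<forall>q p. 0<p \<and> (\<forall>t. q t \<in> X) \<and> (\<forall>t. q (t+p) = q t) \<and> (\<forall>t. dist (f (q t)) (q (Suc t)) \<le> \<delta>)
   \<longrightarrow> (\<exists>z\<in>X. \<forall>t<p. dist (q t) ((f^^t) z) \<le> \<epsilon>))"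

locale dyn =
  fixes X :: "'a::metric_space set" and f :: "'a \<Rightarrow> 'a"
  assumes cpt: "compact X" and cont: "continuous_on X f" and inv: "f ` X \<subseteq> X"
begin

lemma fp_in: "x \<in> X \<Longrightarrow> (f^^n) x \<in> X"
  by (induction n) (use inv in auto)

lemma fp_cont: "continuous_on X (f^^n)"
proof (induction n)
  case 0 then show ?case by (simp add: continuous_on_id)
next
  case (Suc n)
  have "continuous_on X (f \<circ> (f^^n))"
    by (rule continuous_on_compose[OF Suc]) (meson continuous_on_subset cont fp_in image_subsetI)
  then show ?case by (simp add: o_def)
qed

lemma fp_tendsto: "(z \<longlonglongrightarrow> y) \<Longrightarrow> y \<in> X \<Longrightarrow> (\<forall>k. z k \<in> X) \<Longrightarrow> ((\<lambda>k. (f^^n) (z k)) \<longlonglongrightarrow> (f^^n) y)"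
  by (rule continuous_on_tendsto_compose[OF fp_cont]) auto

lemma closed_X: "closed X" using cpt compact_imp_closed by blast

lemma limit_le:
  assumes "z \<longlonglongrightarrow> y" "y \<in> X" "\<forall>k. z k \<in> X" "\<exists>N. \<forall>k\<ge>N. dist a ((f^^n) (z k)) \<le> c"
  shows "dist a ((f^^n) y) \<le> c"
proof -
  have "((\<lambda>k. dist a ((f^^n) (z k))) \<longlonglongrightarrow> dist a ((f^^n) y))"
    by (intro tendsto_dist tendsto_const fp_tendsto assms)
  then show ?thesis using LIMSEQ_le_const2 assms(4) by blast
qed

lemma seqc: 
  fixes z :: "nat \<Rightarrow> 'a"
  assumes "\<forall>k. z k \<in> X"
  obtains r y where "strict_mono r" "y \<in> X" "(z \<circ> r) \<longlonglongrightarrow> y"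
  using seq_compactE[OF compact_imp_seq_compact[OF cpt] assms] by metis

lemma lemmaS:
  assumes ps: "PS X f \<epsilon> \<delta>" and phiX: "\<forall>u. \<phi> u \<in> X"
    and step: "\<forall>u. dist (f (\<phi> u)) (\<phi> (Suc u)) \<le> \<delta>"
    and ret: "\<forall>n. \<exists>T\<ge>n. 0<T \<and> dist (f (\<phi> (T-1))) (\<phi> 0) \<le> \<delta>"
  shows "\<exists>z\<in>X. \<forall>u. dist (\<phi> u) ((f^^u) z) \<le> \<epsilon>"
proof -
  obtain T where T: "\<And>n. T n \<ge> Suc n" "\<And>n. dist (f (\<phi> (T n - 1))) (\<phi> 0) \<le> \<delta>"
  proof -
    have "\<forall>n. \<exists>T. T \<ge> Suc n \<and> dist (f (\<phi> (T - 1))) (\<phi> 0) \<le> \<delta>" using ret by blast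
    then show ?thesis using that by metis
  qed
  have "\<exists>z\<in>X. \<forall>u<T n. dist (\<phi> u) ((f^^u) z) \<le> \<epsilon>" for n
  proof -
    define q where "q t = \<phi> (t mod T n)" for t
    have Tp: "0 < T n" using T(1)[of n] by simp
    have "\<forall>t. dist (f (q t)) (q (Suc t)) \<le> \<delta>"
    proof
      fix t
      show "dist (f (q t)) (q (Suc t)) \<le> \<delta>"
      proof (cases "Suc (t mod T n) = T n")
        case True
        then have "t mod T n = T n - 1" by simp
        then show ?thesis using True T(2)[of n] by (simp add: q_def mod_Suc)
      next
        case False
        then show ?thesis using step by (simp add: q_def mod_Suc)
      qed
    qed
    moreover have "\<forall>t. q (t + T n) = q t" by (simp add: q_def)
    moreover have "\<forall>t. q t \<in> X" using phiX by (simp add: q_def)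
    ultimately obtain z where "z \<in> X" "\<forall>t<T n. dist (q t) ((f^^t) z) \<le> \<epsilon>"
      using ps Tp unfolding PS_def by blast
    then show ?thesis by (auto simp: q_def)
  qed
  then obtain z where zX: "\<And>n. z n \<in> X" and zs: "\<And>n u. u < T n \<Longrightarrow> dist (\<phi> u) ((f^^u) (z n)) \<le> \<epsilon>"
    by metis
  obtain r y where r: "strict_mono r" "y \<in> X" "(z \<circ> r) \<longlonglongrightarrow> y" using seqc zX by metis
  have "dist (\<phi> u) ((f^^u) y) \<le> \<epsilon>" for u
  proof (rule limit_le[OF r(3) r(2)])
    show "\<forall>k. (z \<circ> r) k \<in> X" using zX by simp
    show "\<exists>N. \<forall>k\<ge>N. dist (\<phi> u) ((f ^^ u) ((z \<circ> r) k)) \<le> \<epsilon>"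
    proof (intro exI allI impI)
      fix k assume "k \<ge> u"
      then have "u < T (r k)" using T(1)[of "r k"] seq_suble[OF r(1), of k] by linarith
      then show "dist (\<phi> u) ((f ^^ u) ((z \<circ> r) k)) \<le> \<epsilon>" using zs by simp
    qed
  qed
  then show ?thesis using r(2) by blast
qed

end


lemma periodic_mult: "(\<forall>t. q (t+p) = q t) \<Longrightarrow> q (t + k*(p::nat)) = q t"
  by (induction k arbitrary: t) (auto simp: add.assoc[symmetric])

lemma density_one_UNIV: "density_one UNIV"
proof -
  have "\<forall>\<^sub>F n in sequentially. real (card (UNIV \<inter> {..<n})) / real n = 1"
    by (rule eventually_sequentiallyI[of 1]) auto
  then show ?thesis unfolding density_one_def by (rule tendsto_eventually)
qed

context dyn begin

lemma fp_add: "(f^^i) ((f^^t) z) = (f^^(t+i)) z"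
  by (metis comp_apply funpow_add add.commute)

lemma thick_PS:
  assumes th: "thick_shadowing X f" and e: "\<epsilon> > 0"
  shows "\<exists>\<delta>>0. PS X f \<epsilon> \<delta>"
proof -
  obtain \<delta> where d: "\<delta> > 0" and D: "\<And>x. (\<forall>i. x i \<in> X) \<and> density_one {i. dist (f (x i)) (x (Suc i)) \<le> \<delta>} \<Longrightarrow>
      (\<exists>z\<in>X. thick {i. dist (x i) ((f ^^ i) z) \<le> \<epsilon>})"
    using th e unfolding thick_shadowing_def by meson
  have "PS X f \<epsilon> \<delta>" unfolding PS_def
  proof (intro allI impI)
    fix q :: "nat \<Rightarrow> 'a" and p :: nat
    assume H: "0 < p \<and> (\<forall>t. q t \<in> X) \<and> (\<forall>t. q (t + p) = q t) \<and> (\<forall>t. dist (f (q t)) (q (Suc t)) \<le> \<delta>)"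
    then have "{i. dist (f (q i)) (q (Suc i)) \<le> \<delta>} = UNIV" by auto
    then obtain z where z: "z \<in> X" "thick {i. dist (q i) ((f ^^ i) z) \<le> \<epsilon>}"
      using D[of q] H density_one_UNIV by auto
    then obtain j where j: "{j..j+2*p} \<subseteq> {i. dist (q i) ((f ^^ i) z) \<le> \<epsilon>}"
      unfolding thick_def by blast
    define t where "t = (j div p + 1) * p"
    have tt: "t = j div p * p + p" unfolding t_def by (simp add: distrib_right)
    have jj: "j = j div p * p + j mod p" by simp
    have jm: "j mod p < p" using H by simp
    have t1: "j < t" using tt jj jm by linarith
    have t2: "t \<le> j + p" using tt jj by linarith
    show "\<exists>z\<in>X. \<forall>t<p. dist (q t) ((f ^^ t) z) \<le> \<epsilon>"
    proof (intro bexI allI impI)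
      show "(f^^t) z \<in> X" using fp_in z by blast
      fix i assume "i < p"
      then have "t + i \<in> {j..j+2*p}" using t1 t2 by auto
      then have "dist (q (t+i)) ((f ^^ (t+i)) z) \<le> \<epsilon>" using j by blast
      moreover have "q (t+i) = q i"
        using periodic_mult[of q p i "j div p + 1"] H by (simp add: t_def add.commute)
      ultimately show "dist (q i) ((f ^^ i) ((f^^t) z)) \<le> \<epsilon>" by (simp add: fp_add)
    qed
  qed
  then show ?thesis using d by blast
qed

end


context dyn begin

lemma nw_sub: "nonwandering X f \<subseteq> X" unfolding nonwandering_def by auto

lemma omega_in:
  assumes z: "z \<in> X" and n: "strict_mono (n::nat\<Rightarrow>nat)" and lim: "(\<lambda>j. (f^^(n j)) z) \<longlonglongrightarrow> w" and w: "w \<in> X"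
  shows "w \<in> nonwandering X f"
  unfolding nonwandering_def
proof (intro CollectI conjI allI impI w)
  fix U assume U: "openin (top_of_set X) U \<and> w \<in> U"
  then obtain e where e: "e > 0" "\<forall>x'\<in>X. dist x' w < e \<longrightarrow> x' \<in> U"
    unfolding openin_euclidean_subtopology_iff by blast
  obtain J where J: "\<forall>j\<ge>J. dist ((f^^(n j)) z) w < e"
    using lim e(1) unfolding LIMSEQ_iff_nz by (metis dist_commute) 
  have a: "(f^^(n J)) z \<in> U" using J e(2) fp_in z by blast
  have b: "(f^^(n (Suc J))) z \<in> U" using J[rule_format, of "Suc J"] e(2) fp_in z by simp
  have lt: "n J < n (Suc J)" using n strict_mono_def by blast
  define m where "m = n (Suc J) - n J"
  have "(f^^m) ((f^^(n J)) z) = (f^^(n (Suc J))) z"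
    unfolding m_def fp_add using lt by simp
  then have "(f^^m) ((f^^(n J)) z) \<in> (f^^m) ` U \<inter> U" using a b by (metis IntI image_eqI)
  moreover have "m \<ge> 1" using lt m_def by simp
  ultimately show "\<exists>n\<ge>1. (f ^^ n) ` U \<inter> U \<noteq> {}" by blast
qed

lemma nw_closed_seq:
  assumes "\<forall>k. w k \<in> nonwandering X f" "w \<longlonglongrightarrow> y"
  shows "y \<in> nonwandering X f"
proof -
  have wX: "\<forall>k. w k \<in> X" using assms(1) nw_sub by blast
  have yX: "y \<in> X" using closed_X wX assms(2) closed_sequentially by blast
  show ?thesis unfolding nonwandering_def
  proof (intro CollectI conjI allI impI yX)
    fix U assume U: "openin (top_of_set X) U \<and> y \<in> U"
    then obtain e where e: "e > 0" "\<forall>x'\<in>X. dist x' y < e \<longrightarrow> x' \<in> U"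
      unfolding openin_euclidean_subtopology_iff by blast
    obtain k where "dist (w k) y < e" using assms(2) e(1) unfolding LIMSEQ_iff_nz by (metis dist_commute order_refl)
    then have "w k \<in> U" using e wX by blast
    then show "\<exists>n\<ge>1. (f ^^ n) ` U \<inter> U \<noteq> {}" using assms(1) U unfolding nonwandering_def by blast
  qed
qed

lemma lemmaP:
  assumes ps: "PS X f \<epsilon> \<delta>" and p: "0 < p" and QX: "\<forall>t. Q t \<in> X" and per: "\<forall>t. Q (t+p) = Q t"
    and step: "\<forall>t. dist (f (Q t)) (Q (Suc t)) \<le> \<delta>"
  shows "\<exists>w\<in>nonwandering X f. \<forall>t. dist (Q t) ((f^^t) w) \<le> \<epsilon>"
proof -
  have "\<forall>n. \<exists>T\<ge>n. 0<T \<and> dist (f (Q (T-1))) (Q 0) \<le> \<delta>"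
  proof
    fix n
    define T where "T = Suc n * p"
    have "n * 1 \<le> n * p" using p by (intro mult_le_mono2) simp
    then have T1: "T \<ge> n" "0 < T" using p by (auto simp: T_def intro: trans_le_add2)
    have "Q T = Q 0" using periodic_mult[of Q p 0 "Suc n"] per by (simp add: T_def)
    moreover have "Suc (T - 1) = T" using T1 by simp
    ultimately have "dist (f (Q (T-1))) (Q 0) \<le> \<delta>" using step by metis
    then show "\<exists>T\<ge>n. 0<T \<and> dist (f (Q (T-1))) (Q 0) \<le> \<delta>" using T1 by blast
  qed
  then obtain z where z: "z \<in> X" "\<forall>u. dist (Q u) ((f^^u) z) \<le> \<epsilon>"
    using lemmaS[OF ps QX step] by blast
  define y where "y j = (f^^(j*p)) z" for j
  have yX: "\<forall>j. y j \<in> X" using fp_in z by (simp add: y_def)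
  obtain r w where r: "strict_mono r" "w \<in> X" "(y \<circ> r) \<longlonglongrightarrow> w" using seqc yX by metis
  have "dist (Q t) ((f^^t) w) \<le> \<epsilon>" for t
  proof (rule limit_le[OF r(3) r(2)])
    show "\<forall>k. (y \<circ> r) k \<in> X" using yX by simp
    have "dist (Q t) ((f ^^ t) ((y \<circ> r) k)) \<le> \<epsilon>" for k
    proof -
      have "(f ^^ t) ((y \<circ> r) k) = (f^^(r k * p + t)) z" by (simp add: y_def fp_add)
      moreover have "Q t = Q (t + r k * p)" using periodic_mult[of Q p t "r k"] per by simp
      ultimately show ?thesis using z(2) by (metis add.commute)
    qed
    then show "\<exists>N. \<forall>k\<ge>N. dist (Q t) ((f ^^ t) ((y \<circ> r) k)) \<le> \<epsilon>" by blast
  qed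
  moreover have "w \<in> nonwandering X f"
  proof (rule omega_in[OF z(1) _ _ r(2)])
    show "strict_mono (\<lambda>j. r j * p)" using r(1) p unfolding strict_mono_def by simp
    show "(\<lambda>j. (f ^^ (r j * p)) z) \<longlonglongrightarrow> w" using r(3) by (simp add: y_def o_def)
  qed
  ultimately show ?thesis by blast
qed

end


lemma mod_shift: 
  assumes "0 < (P::nat)" "i < P"
  shows "(N + i + (P - N mod P)) mod P = i"
proof -
  have "N mod P < P" using assms by simp
  have h: "N div P * P + N mod P = N" by simp
  have "(N div P + 1) * P = N div P * P + P" by simp
  then have "N + i + (P - N mod P) = i + (N div P + 1) * P"
    using \<open>N mod P < P\<close> h by linarith
  moreover have "(i + (N div P + 1) * P) mod P = i mod P" by (rule mod_mult_self1)
  ultimately show ?thesis using assms by simp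
qed

context dyn begin

lemma PS_tail:
  assumes U: "\<forall>\<epsilon>>0. \<exists>\<delta>>0. PS X f \<epsilon> \<delta>" and xX: "\<forall>i. x i \<in> X"
    and asy: "(\<lambda>i. dist (f (x i)) (x (Suc i))) \<longlonglongrightarrow> 0" and e: "\<epsilon> > 0"
  shows "\<exists>N. \<exists>w\<in>nonwandering X f. \<forall>t\<ge>N. dist (x t) ((f^^t) w) \<le> \<epsilon>"
proof -
  obtain \<delta> where d: "\<delta> > 0" "PS X f \<epsilon> \<delta>" using U e by blast
  obtain r a where r: "strict_mono r" "a \<in> X" "(x \<circ> r) \<longlonglongrightarrow> a" using seqc xX by metis
  obtain N1 where "\<forall>t\<ge>N1. norm (dist (f (x t)) (x (Suc t)) - 0) < \<delta>/2"
    using asy d(1) unfolding LIMSEQ_iff by (meson half_gt_zero)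
  then have N1: "\<forall>t\<ge>N1. dist (f (x t)) (x (Suc t)) < \<delta>/2" by simp
  obtain N2 where N2: "\<forall>k\<ge>N2. dist (x (r k)) a < \<delta>/4"
    using r(3) d(1) unfolding LIMSEQ_iff_nz by (metis o_apply zero_less_divide_iff zero_less_numeral)
  define K where "K = max N1 N2"
  define N where "N = r K"
  have NN1: "N \<ge> N1" unfolding N_def K_def using seq_suble[OF r(1), of "max N1 N2"] by linarith
  have xNa: "dist (x N) a < \<delta>/4" using N2 unfolding N_def K_def by simp
  have "\<exists>w\<in>nonwandering X f. \<forall>t. N \<le> t \<and> t < r (Suc K + j) \<longrightarrow> dist (x t) ((f^^t) w) \<le> \<epsilon>" for j
  proof -
    define R where "R = r (Suc K + j)"
    have NR: "N < R" unfolding N_def R_def using r(1) by (simp add: strict_mono_less)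
    define P where "P = R - N"
    have P: "0 < P" using NR P_def by simp
    define Q where "Q t = x (N + (t + (P - N mod P)) mod P)" for t
    have Qx: "N \<le> t \<Longrightarrow> t < R \<Longrightarrow> Q t = x t" for t
    proof -
      assume "N \<le> t" "t < R"
      then obtain i where i: "t = N + i" "i < P" unfolding P_def by (metis add_diff_inverse_nat diff_less_mono not_le)
      then show "Q t = x t" unfolding Q_def using mod_shift[OF P i(2), of N] by simp
    qed
    have QX: "\<forall>t. Q t \<in> X" using xX Q_def by simp
    have per: "\<forall>t. Q (t+P) = Q t"
    proof
      fix t
      have "t + P + (P - N mod P) = (t + (P - N mod P)) + P" by simp
      then show "Q (t+P) = Q t" unfolding Q_def by (metis mod_add_self2)
    qed
    have step: "\<forall>t. dist (f (Q t)) (Q (Suc t)) \<le> \<delta>"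
    proof
      fix t
      define m where "m = (t + (P - N mod P)) mod P"
      have mP: "m < P" using P m_def by simp
      have sm: "(Suc t + (P - N mod P)) mod P = (if Suc m = P then 0 else Suc m)"
        unfolding m_def by (simp add: mod_Suc)
      show "dist (f (Q t)) (Q (Suc t)) \<le> \<delta>"
      proof (cases "Suc m = P")
        case True
        have "N + m = R - 1" using True P_def NR by linarith
        moreover have "Q t = x (N+m)" unfolding Q_def m_def by simp
        ultimately have Qt: "Q t = x (R - 1)" by simp
        have QS: "Q (Suc t) = x N" unfolding Q_def using sm True by simp
        have RS: "Suc (R - 1) = R" using NR by simp
        have "R - 1 \<ge> N1" using NN1 NR by linarith
        then have "dist (f (x (R-1))) (x R) < \<delta>/2" using N1 RS by metis
        moreover have "dist (x R) a < \<delta>/4" unfolding R_def using N2 K_def by simp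
        ultimately have "dist (f (x (R-1))) (x N) < \<delta>/2 + \<delta>/4 + \<delta>/4"
          using xNa dist_triangle[of "f (x (R-1))" "x N" "x R"] dist_triangle[of "x R" "x N" a]
          by (simp add: RS dist_commute)
        then show ?thesis using Qt QS by simp
      next
        case False
        have Qt: "Q t = x (N + m)" unfolding Q_def m_def by simp
        have QS: "Q (Suc t) = x (Suc (N + m))" unfolding Q_def using sm False by simp
        have "dist (f (x (N+m))) (x (Suc (N + m))) < \<delta>/2" using N1 NN1 by simp
        then have "dist (f (x (N+m))) (x (Suc (N + m))) \<le> \<delta>" using d(1) by linarith
        then show ?thesis using Qt QS by simp
      qed
    qed
    obtain w where w: "w \<in> nonwandering X f" "\<forall>t. dist (Q t) ((f^^t) w) \<le> \<epsilon>"
      using lemmaP[OF d(2) P QX per step] by blast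
    show ?thesis
    proof (intro bexI[OF _ w(1)] allI impI)
      fix t assume "N \<le> t \<and> t < r (Suc K + j)"
      then have "Q t = x t" using Qx R_def by auto
      then show "dist (x t) ((f ^^ t) w) \<le> \<epsilon>" using w(2) by metis
    qed
  qed
  then have "\<forall>j. \<exists>w. w \<in> nonwandering X f \<and> (\<forall>t. N \<le> t \<and> t < r (Suc K + j) \<longrightarrow> dist (x t) ((f^^t) w) \<le> \<epsilon>)" by blast
  then obtain W where W0: "\<forall>j. W j \<in> nonwandering X f \<and> (\<forall>t. N \<le> t \<and> t < r (Suc K + j) \<longrightarrow> dist (x t) ((f^^t) (W j)) \<le> \<epsilon>)"
    using choice[of "\<lambda>j w. w \<in> nonwandering X f \<and> (\<forall>t. N \<le> t \<and> t < r (Suc K + j) \<longrightarrow> dist (x t) ((f^^t) w) \<le> \<epsilon>)"] by blast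
  have W: "\<And>j. W j \<in> nonwandering X f"
     "\<And>j t. N \<le> t \<Longrightarrow> t < r (Suc K + j) \<Longrightarrow> dist (x t) ((f^^t) (W j)) \<le> \<epsilon>" using W0 by auto
  have WX: "\<forall>j. W j \<in> X" using W(1) nw_sub by blast
  obtain s w where s: "strict_mono s" "w \<in> X" "(W \<circ> s) \<longlonglongrightarrow> w" using seqc WX by metis
  have wnw: "w \<in> nonwandering X f" using nw_closed_seq[OF _ s(3)] W(1) by simp
  have "dist (x t) ((f^^t) w) \<le> \<epsilon>" if "t \<ge> N" for t
  proof (rule limit_le[OF s(3) s(2)])
    show "\<forall>k. (W \<circ> s) k \<in> X" using WX by simp
    show "\<exists>M. \<forall>k\<ge>M. dist (x t) ((f ^^ t) ((W \<circ> s) k)) \<le> \<epsilon>"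
    proof (intro exI allI impI)
      fix k assume k: "k \<ge> t"
      have "t < r (Suc K + s k)"
        using seq_suble[OF r(1), of "Suc K + s k"] seq_suble[OF s(1), of k] k by linarith
      then show "dist (x t) ((f ^^ t) ((W \<circ> s) k)) \<le> \<epsilon>" using W(2) that by simp
    qed
  qed
  then show ?thesis using wnw by blast
qed

end


context dyn begin

lemma eq_final:
  assumes eq: "equicontinuous X f"
    and H: "\<forall>\<epsilon>>0. \<exists>N. \<exists>w\<in>nonwandering X f. \<forall>t\<ge>N. dist (x t) ((f^^t) w) \<le> \<epsilon>"
  shows "\<exists>y\<in>nonwandering X f. (\<lambda>t. dist (x t) ((f^^t) y)) \<longlonglongrightarrow> 0"
proof -
  have "\<forall>k. \<exists>N w. w \<in> nonwandering X f \<and> (\<forall>t\<ge>N. dist (x t) ((f^^t) w) \<le> 1/(Suc k))"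
    using H by (metis of_nat_0_less_iff zero_less_Suc zero_less_divide_1_iff)
  then obtain N W where NW: "\<forall>k. W k \<in> nonwandering X f \<and> (\<forall>t\<ge>N k. dist (x t) ((f^^t) (W k)) \<le> 1/(Suc k))"
    by metis
  have WX: "\<forall>k. W k \<in> X" using NW nw_sub by blast
  obtain r y where r: "strict_mono r" "y \<in> X" "(W \<circ> r) \<longlonglongrightarrow> y" using seqc WX by metis
  have ynw: "y \<in> nonwandering X f" using nw_closed_seq[OF _ r(3)] NW by simp
  have "(\<lambda>t. dist (x t) ((f^^t) y)) \<longlonglongrightarrow> 0"
    unfolding LIMSEQ_iff
  proof (intro allI impI)
    fix \<tau> :: real assume \<tau>: "\<tau> > 0"
    obtain \<delta> where d: "\<delta> > 0" "\<forall>x\<in>X. \<forall>y\<in>X. dist x y \<le> \<delta> \<longrightarrow> (\<forall>n. dist ((f ^^ n) x) ((f ^^ n) y) \<le> \<tau>/2)"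
      using eq \<tau> unfolding equicontinuous_def by (meson half_gt_zero)
    obtain K1 where K1: "\<forall>k\<ge>K1. dist ((W \<circ> r) k) y < \<delta>" using r(3) d(1) unfolding LIMSEQ_iff_nz by blast
    obtain K2 where K2: "1 / real (Suc K2) < \<tau>/2" using \<tau> 
      by (metis half_gt_zero nat_approx_posE)
    define k where "k = max K1 K2"
    have k1: "dist (W (r k)) y < \<delta>" using K1 k_def by simp
    have "real (Suc K2) \<le> real (Suc (r k))" using seq_suble[OF r(1), of k] k_def by simp
    then have "1 / real (Suc (r k)) \<le> 1 / real (Suc K2)" by (intro divide_left_mono) auto
    then have k2: "1 / real (Suc (r k)) < \<tau>/2" using K2 by linarith
    show "\<exists>no. \<forall>n\<ge>no. norm (dist (x n) ((f ^^ n) y) - 0) < \<tau>"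
    proof (intro exI allI impI)
      fix t assume t: "t \<ge> N (r k)"
      have a: "dist (x t) ((f^^t) (W (r k))) \<le> 1 / real (Suc (r k))" using NW t by simp
      have b: "dist ((f^^t) (W (r k))) ((f^^t) y) \<le> \<tau>/2" using d(2) k1 WX r(2) by simp
      have "dist (x t) ((f^^t) y) < \<tau>"
        using dist_triangle[of "x t" "(f^^t) y" "(f^^t) (W (r k))"] a b k2 by linarith
      then show "norm (dist (x t) ((f ^^ t) y) - 0) < \<tau>" by simp
    qed
  qed
  then show ?thesis using ynw by blast
qed

end


context dyn begin

lemma cexp_asym:
  assumes ce: "\<forall>x\<in>full_orbits X f. \<forall>y\<in>full_orbits X f. (\<forall>i. dist (x i) (y i) \<le> e) \<longrightarrow> x = y"
    and u: "u \<in> X" and v: "v \<in> X" and cl: "\<forall>t. dist ((f^^t) u) ((f^^t) v) \<le> e"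
  shows "(\<lambda>t. dist ((f^^t) u) ((f^^t) v)) \<longlonglongrightarrow> 0"
proof (rule ccontr)
  assume "\<not> ?thesis"
  then obtain \<eta> where \<eta>: "\<eta> > 0" "\<forall>N. \<exists>t\<ge>N. \<eta> \<le> dist ((f^^t) u) ((f^^t) v)"
    unfolding LIMSEQ_iff by (auto simp: not_less)
  then have "\<forall>k. \<exists>t. t \<ge> k \<and> \<eta> \<le> dist ((f^^t) u) ((f^^t) v)" by blast
  then obtain tt where tt: "\<forall>k. tt k \<ge> k \<and> \<eta> \<le> dist ((f^^(tt k)) u) ((f^^(tt k)) v)"
    using choice[of "\<lambda>k t. t \<ge> k \<and> \<eta> \<le> dist ((f^^t) u) ((f^^t) v)"] by blast
  define g where "g k i = ((f^^nat (int (tt k) + i)) u, (f^^nat (int (tt k) + i)) v)" for k i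
  have gX: "g k i \<in> X \<times> X" for k i using fp_in u v by (simp add: g_def)
  have cXX: "compact (X \<times> X)" using cpt by (simp add: compact_Times)
  interpret S: subseqs "\<lambda>n r. convergent (\<lambda>k. g (r k) (int_decode n))"
  proof
    fix n and s :: "nat \<Rightarrow> nat" assume "strict_mono s"
    have "\<forall>k. g (s k) (int_decode n) \<in> X \<times> X" using gX by blast
    from seq_compactE[OF compact_imp_seq_compact[OF cXX] this]
    obtain l r where "l \<in> X \<times> X" "strict_mono r" "((\<lambda>k. g (s k) (int_decode n)) \<circ> r) \<longlonglongrightarrow> l" .
    then show "\<exists>r'. strict_mono r' \<and> convergent (\<lambda>k. g ((s \<circ> r') k) (int_decode n))"
      unfolding convergent_def by (auto simp: o_def)
  qed
  have conv: "convergent (\<lambda>k. g (S.diagseq k) i)" for i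
  proof -
    obtain n where n: "int_decode n = i" using int_encode_inverse by blast
    have "convergent (\<lambda>k. g ((S.diagseq \<circ> (+) (Suc n)) k) (int_decode n))"
    proof (rule S.diagseq_holds)
      fix r s :: "nat \<Rightarrow> nat" and n :: nat assume "strict_mono r" "convergent (\<lambda>k. g (s k) (int_decode n))"
      then show "convergent (\<lambda>k. g ((s \<circ> r) k) (int_decode n))"
        using convergent_subseq_convergent[of "\<lambda>k. g (s k) (int_decode n)" r] by (simp add: o_def)
    qed
    then have "convergent (\<lambda>k. g (S.diagseq (k + Suc n)) i)" using n by (simp add: add.commute)
    then obtain L where "(\<lambda>k. g (S.diagseq (k + Suc n)) i) \<longlonglongrightarrow> L" unfolding convergent_def by blast
    then have "(\<lambda>k. g (S.diagseq k) i) \<longlonglongrightarrow> L" by (rule LIMSEQ_offset)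
    then show ?thesis unfolding convergent_def by blast
  qed
  define G where "G i = lim (\<lambda>k. g (S.diagseq k) i)" for i
  have GL: "(\<lambda>k. g (S.diagseq k) i) \<longlonglongrightarrow> G i" for i
    unfolding G_def using conv[of i] by (simp add: convergent_LIMSEQ_iff)
  define a where "a i = fst (G i)" for i
  define b where "b i = snd (G i)" for i
  have aL: "(\<lambda>k. (f^^nat (int (tt (S.diagseq k)) + i)) u) \<longlonglongrightarrow> a i" for i
    using tendsto_fst[OF GL[of i]] by (simp add: a_def g_def)
  have bL: "(\<lambda>k. (f^^nat (int (tt (S.diagseq k)) + i)) v) \<longlonglongrightarrow> b i" for i
    using tendsto_snd[OF GL[of i]] by (simp add: b_def g_def)
  have aX: "a i \<in> X" for i using closed_sequentially[OF closed_X _ aL[of i]] fp_in u by simp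
  have bX: "b i \<in> X" for i using closed_sequentially[OF closed_X _ bL[of i]] fp_in v by simp
  have ev: "\<forall>\<^sub>F k in sequentially. nat (int (tt (S.diagseq k)) + (i+1)) = Suc (nat (int (tt (S.diagseq k)) + i))" for i
  proof (rule eventually_sequentiallyI[of "nat (- i)"])
    fix k assume "nat (-i) \<le> k"
    moreover have "k \<le> S.diagseq k" using seq_suble[OF S.subseq_diagseq, of k] .
    moreover have "S.diagseq k \<le> tt (S.diagseq k)" using tt by blast
    ultimately have "int (tt (S.diagseq k)) + i \<ge> 0" by linarith
    then show "nat (int (tt (S.diagseq k)) + (i+1)) = Suc (nat (int (tt (S.diagseq k)) + i))" by linarith
  qed
  have orb: "f (c i) = c (i+1)" if cL: "\<And>i. (\<lambda>k. (f^^nat (int (tt (S.diagseq k)) + i)) w) \<longlonglongrightarrow> c i"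
     and cX: "\<And>i. c i \<in> X" and w: "w \<in> X" for c w i
  proof -
    have "(\<lambda>k. f ((f^^nat (int (tt (S.diagseq k)) + i)) w)) \<longlonglongrightarrow> f (c i)"
      by (rule continuous_on_tendsto_compose[OF cont cL cX]) (use fp_in w in auto)
    moreover have "\<forall>\<^sub>F k in sequentially. f ((f^^nat (int (tt (S.diagseq k)) + i)) w) = (f^^nat (int (tt (S.diagseq k)) + (i+1))) w"
      using ev[of i] by eventually_elim simp
    ultimately have "(\<lambda>k. (f^^nat (int (tt (S.diagseq k)) + (i+1))) w) \<longlonglongrightarrow> f (c i)"
      by (rule Lim_transform_eventually)
    then show ?thesis using cL[of "i+1"] LIMSEQ_unique by blast
  qed
  have afo: "a \<in> full_orbits X f" unfolding full_orbits_def using aX orb[OF aL aX u] by blast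
  have bfo: "b \<in> full_orbits X f" unfolding full_orbits_def using bX orb[OF bL bX v] by blast
  have "dist (a i) (b i) \<le> e" for i
  proof (rule LIMSEQ_le_const2)
    show "(\<lambda>k. dist ((f^^nat (int (tt (S.diagseq k)) + i)) u) ((f^^nat (int (tt (S.diagseq k)) + i)) v)) \<longlonglongrightarrow> dist (a i) (b i)"
      by (intro tendsto_dist aL bL)
    show "\<exists>N. \<forall>n\<ge>N. dist ((f^^nat (int (tt (S.diagseq n)) + i)) u) ((f^^nat (int (tt (S.diagseq n)) + i)) v) \<le> e"
      using cl by blast
  qed
  then have "a = b" using ce afo bfo by blast
  moreover have "\<eta> \<le> dist (a 0) (b 0)"
  proof (rule LIMSEQ_le_const)
    show "(\<lambda>k. dist ((f^^nat (int (tt (S.diagseq k)) + 0)) u) ((f^^nat (int (tt (S.diagseq k)) + 0)) v)) \<longlonglongrightarrow> dist (a 0) (b 0)"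
      by (intro tendsto_dist aL bL)
    show "\<exists>N. \<forall>n\<ge>N. \<eta> \<le> dist ((f^^nat (int (tt (S.diagseq n)) + 0)) u) ((f^^nat (int (tt (S.diagseq n)) + 0)) v)"
      using tt by simp
  qed
  ultimately show False using \<eta>(1) by simp
qed

end


context dyn begin

lemma cexp_final:
  assumes ce0: "c_expansive X f"
    and H: "\<forall>\<epsilon>>0. \<exists>N. \<exists>w\<in>nonwandering X f. \<forall>t\<ge>N. dist (x t) ((f^^t) w) \<le> \<epsilon>"
  shows "\<exists>y\<in>nonwandering X f. (\<lambda>t. dist (x t) ((f^^t) y)) \<longlonglongrightarrow> 0"
proof -
  obtain e where e: "e > 0" and ce: "\<forall>x\<in>full_orbits X f. \<forall>y\<in>full_orbits X f. (\<forall>i. dist (x i) (y i) \<le> e) \<longrightarrow> x = y"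
    using ce0 unfolding c_expansive_def by blast
  obtain N0 y where y: "y \<in> nonwandering X f" "\<forall>t\<ge>N0. dist (x t) ((f^^t) y) \<le> e/2"
    using H e by (meson half_gt_zero)
  have yX: "y \<in> X" using y nw_sub by blast
  have "(\<lambda>t. dist (x t) ((f^^t) y)) \<longlonglongrightarrow> 0"
    unfolding LIMSEQ_iff
  proof (intro allI impI)
    fix \<tau> :: real assume \<tau>: "\<tau> > 0"
    define \<epsilon> where "\<epsilon> = min \<tau> (e/2) / 2"
    have ep: "\<epsilon> > 0" "\<epsilon> \<le> e/2" "2*\<epsilon> \<le> \<tau>" using \<tau> e by (auto simp: \<epsilon>_def)
    obtain N1 w where w: "w \<in> nonwandering X f" "\<forall>t\<ge>N1. dist (x t) ((f^^t) w) \<le> \<epsilon>"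
      using H ep(1) by blast
    have wX: "w \<in> X" using w nw_sub by blast
    define M where "M = max N0 N1"
    have cl: "\<forall>s. dist ((f^^s) ((f^^M) w)) ((f^^s) ((f^^M) y)) \<le> e"
    proof
      fix s
      have a: "dist (x (M+s)) ((f^^(M+s)) w) \<le> \<epsilon>" using w(2) M_def by simp
      have b: "dist (x (M+s)) ((f^^(M+s)) y) \<le> e/2" using y(2) M_def by simp
      have "dist ((f^^(M+s)) w) ((f^^(M+s)) y) \<le> e"
        using dist_triangle[of "(f^^(M+s)) w" "(f^^(M+s)) y" "x (M+s)"] a b ep(2) by (simp add: dist_commute)
      then show "dist ((f^^s) ((f^^M) w)) ((f^^s) ((f^^M) y)) \<le> e" by (simp add: fp_add)
    qed
    have "(\<lambda>s. dist ((f^^s) ((f^^M) w)) ((f^^s) ((f^^M) y))) \<longlonglongrightarrow> 0"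
      by (rule cexp_asym[OF ce _ _ cl]) (use fp_in wX yX in auto)
    then obtain S where S: "\<forall>s\<ge>S. dist ((f^^s) ((f^^M) w)) ((f^^s) ((f^^M) y)) < \<epsilon>"
      unfolding LIMSEQ_iff using ep(1) by (metis abs_of_nonneg zero_le_dist real_norm_def diff_zero)
    show "\<exists>no. \<forall>n\<ge>no. norm (dist (x n) ((f ^^ n) y) - 0) < \<tau>"
    proof (intro exI allI impI)
      fix t assume t: "t \<ge> M + S"
      then obtain s where s: "t = M + s" "s \<ge> S" by (metis add_le_imp_le_left le_add_diff_inverse le_add1 le_trans)
      have a: "dist (x t) ((f^^t) w) \<le> \<epsilon>" using w(2) t M_def by simp
      have b: "dist ((f^^t) w) ((f^^t) y) < \<epsilon>" using S s by (simp add: fp_add)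
      have "dist (x t) ((f^^t) y) < \<tau>" using dist_triangle[of "x t" "(f^^t) y" "(f^^t) w"] a b ep(3) by linarith
      then show "norm (dist (x t) ((f ^^ t) y) - 0) < \<tau>" by simp
    qed
  qed
  then show ?thesis using y(1) by blast
qed

end


context dyn begin

lemma limit_PS:
  assumes ls: "limit_shadowing X f" and e: "\<epsilon> > 0"
  shows "\<exists>\<delta>>0. PS X f \<epsilon> \<delta>"
proof (rule ccontr)
  assume "\<not> ?thesis"
  then have nps: "\<forall>m::nat. \<not> PS X f \<epsilon> (1 / real (Suc m))" by simp
  have "\<forall>m. \<exists>qp. 0 < snd qp \<and> (\<forall>t. fst qp t \<in> X) \<and> (\<forall>t. fst qp (t + snd qp) = fst qp t)
       \<and> (\<forall>t. dist (f (fst qp t)) (fst qp (Suc t)) \<le> 1 / real (Suc m))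
       \<and> (\<forall>z\<in>X. \<exists>t<snd qp. dist (fst qp t) ((f^^t) z) > \<epsilon>)"
  proof
    fix m
    obtain q p where "0<p \<and> (\<forall>t. q t \<in> X) \<and> (\<forall>t. q (t+p) = q t) \<and> (\<forall>t. dist (f (q t)) (q (Suc t)) \<le> 1 / real (Suc m))"
       "\<not> (\<exists>z\<in>X. \<forall>t<p. dist (q t) ((f^^t) z) \<le> \<epsilon>)"
      using nps[rule_format, of m] unfolding PS_def by blast
    then show "\<exists>qp. 0 < snd qp \<and> (\<forall>t. fst qp t \<in> X) \<and> (\<forall>t. fst qp (t + snd qp) = fst qp t)
       \<and> (\<forall>t. dist (f (fst qp t)) (fst qp (Suc t)) \<le> 1 / real (Suc m))
       \<and> (\<forall>z\<in>X. \<exists>t<snd qp. dist (fst qp t) ((f^^t) z) > \<epsilon>)"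
      by (intro exI[of _ "(q,p)"]) (auto simp: not_le)
  qed
  then obtain QP where QP: "\<forall>m. 0 < snd (QP m) \<and> (\<forall>t. fst (QP m) t \<in> X) \<and> (\<forall>t. fst (QP m) (t + snd (QP m)) = fst (QP m) t)
       \<and> (\<forall>t. dist (f (fst (QP m) t)) (fst (QP m) (Suc t)) \<le> 1 / real (Suc m))
       \<and> (\<forall>z\<in>X. \<exists>t<snd (QP m). dist (fst (QP m) t) ((f^^t) z) > \<epsilon>)"
    using choice by metis
  define q where "q m = fst (QP m)" for m
  define p where "p m = snd (QP m)" for m
  have p0: "\<And>m. 0 < p m" and qX: "\<And>m t. q m t \<in> X" and qper: "\<And>m t. q m (t + p m) = q m t"
    and qstep: "\<And>m t. dist (f (q m t)) (q m (Suc t)) \<le> 1 / real (Suc m)"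
    and qns: "\<And>m z. z \<in> X \<Longrightarrow> \<exists>t<p m. dist (q m t) ((f^^t) z) > \<epsilon>"
    using QP unfolding q_def p_def by blast+
  obtain \<sigma> a where \<sigma>: "strict_mono \<sigma>" "a \<in> X" "((\<lambda>m. q m 0) \<circ> \<sigma>) \<longlonglongrightarrow> a"
    using seqc[of "\<lambda>m. q m 0"] qX by metis
  define L where "L k = p (\<sigma> k)" for k
  define T where "T k = (\<Sum>i<k. L i)" for k
  have TS: "T (Suc k) = T k + L k" for k by (simp add: T_def)
  have Tmono: "k \<le> k' \<Longrightarrow> T k \<le> T k'" for k k'
    unfolding T_def by (rule sum_mono2) auto
  have Tge: "k \<le> T k" for k
  proof (induction k)
    case (Suc k) then show ?case using TS[of k] p0[of "\<sigma> k"] L_def by simp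
  qed (simp add: T_def)
  define blk where "blk t = (LEAST k. t < T (Suc k))" for t
  have blk1: "t < T (Suc (blk t))" for t
    unfolding blk_def by (rule LeastI[of _ t]) (use Tge[of "Suc t"] in simp)
  have blk2: "T (blk t) \<le> t" for t
  proof (cases "blk t")
    case 0 then show ?thesis by (simp add: T_def)
  next
    case (Suc k)
    then have "\<not> t < T (Suc k)" unfolding blk_def using not_less_Least[of k "\<lambda>k. t < T (Suc k)"] 
      by (metis blk_def lessI)
    then show ?thesis using Suc by simp
  qed
  have blk_eq: "T k \<le> t \<Longrightarrow> t < T (Suc k) \<Longrightarrow> blk t = k" for k t
  proof -
    assume a1: "T k \<le> t" and a2: "t < T (Suc k)"
    show "blk t = k" unfolding blk_def
    proof (rule Least_equality[where P="\<lambda>k. t < T (Suc k)", OF a2])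
      fix k' assume "t < T (Suc k')"
      show "k \<le> k'"
      proof (rule ccontr)
        assume "\<not> k \<le> k'"
        then have "T (Suc k') \<le> T k" using Tmono by simp
        then show False using a1 \<open>t < T (Suc k')\<close> by simp
      qed
    qed
  qed
  define \<psi> where "\<psi> t = q (\<sigma> (blk t)) (t - T (blk t))" for t
  have \<psi>X: "\<forall>t. \<psi> t \<in> X" using qX \<psi>_def by simp
  have \<psi>k: "i < L k \<Longrightarrow> \<psi> (T k + i) = q (\<sigma> k) i" for k i
  proof -
    assume "i < L k"
    then have "blk (T k + i) = k" using blk_eq[of k "T k + i"] TS[of k] by simp
    then show ?thesis by (simp add: \<psi>_def)
  qed
  have asy: "(\<lambda>t. dist (f (\<psi> t)) (\<psi> (Suc t))) \<longlonglongrightarrow> 0"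
    unfolding LIMSEQ_iff
  proof (intro allI impI)
    fix \<eta> :: real assume \<eta>: "\<eta> > 0"
    obtain K1 where K1: "\<forall>k\<ge>K1. dist (q (\<sigma> k) 0) a < \<eta>/4"
      using \<sigma>(3) \<eta> unfolding LIMSEQ_iff_nz by (metis o_apply zero_less_divide_iff zero_less_numeral)
    obtain K2 where K2: "1 / real (Suc K2) < \<eta>/2" using \<eta> by (metis half_gt_zero nat_approx_posE)
    define K where "K = max K1 K2"
    show "\<exists>no. \<forall>n\<ge>no. norm (dist (f (\<psi> n)) (\<psi> (Suc n)) - 0) < \<eta>"
    proof (intro exI allI impI)
      fix t assume t: "t \<ge> T K"
      define k where "k = blk t"
      have kK: "k \<ge> K"
      proof (rule ccontr)
        assume "\<not> K \<le> k"
        then have "T (Suc k) \<le> T K" using Tmono by simp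
        then show False using blk1[of t] t k_def by simp
      qed
      have small: "1 / real (Suc (\<sigma> k)) < \<eta>/2"
      proof -
        have "real (Suc K2) \<le> real (Suc (\<sigma> k))" using seq_suble[OF \<sigma>(1), of k] kK K_def by simp
        then have "1 / real (Suc (\<sigma> k)) \<le> 1 / real (Suc K2)" by (intro divide_left_mono) auto
        then show ?thesis using K2 by linarith
      qed
      define i where "i = t - T k"
      have ti: "t = T k + i" "i < L k" using blk1[of t] blk2[of t] TS[of k] k_def i_def by auto
      have "dist (f (\<psi> t)) (\<psi> (Suc t)) < \<eta>"
      proof (cases "Suc i < L k")
        case True
        then have "\<psi> (Suc t) = q (\<sigma> k) (Suc i)" using \<psi>k[of "Suc i" k] ti by simp
        moreover have "\<psi> t = q (\<sigma> k) i" using \<psi>k ti by simp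
        ultimately show ?thesis using qstep[of "\<sigma> k" i] small \<eta> by simp
      next
        case False
        then have Si: "Suc i = L k" using ti by simp
        have "Suc t = T (Suc k) + 0" using Si ti TS[of k] by simp
        then have "\<psi> (Suc t) = \<psi> (T (Suc k) + 0)" by simp
        also have "\<dots> = q (\<sigma> (Suc k)) 0" using \<psi>k[of 0 "Suc k"] p0 L_def by simp
        finally have a1: "\<psi> (Suc t) = q (\<sigma> (Suc k)) 0" .
        have a2: "\<psi> t = q (\<sigma> k) i" using \<psi>k ti by simp
        have a3: "q (\<sigma> k) (Suc i) = q (\<sigma> k) 0" using qper[of "\<sigma> k" 0] Si L_def by simp
        have d1: "dist (f (q (\<sigma> k) i)) (q (\<sigma> k) 0) < \<eta>/2" using qstep[of "\<sigma> k" i] small a3 by simp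
        have d2: "dist (q (\<sigma> k) 0) a < \<eta>/4" using K1 kK K_def by simp
        have d3: "dist (q (\<sigma> (Suc k)) 0) a < \<eta>/4" using K1 kK K_def by simp
        have "dist (f (q (\<sigma> k) i)) (q (\<sigma> (Suc k)) 0) < \<eta>"
          using dist_triangle[of "f (q (\<sigma> k) i)" "q (\<sigma> (Suc k)) 0" "q (\<sigma> k) 0"]
            dist_triangle[of "q (\<sigma> k) 0" "q (\<sigma> (Suc k)) 0" a] d1 d2 d3
          by (simp add: dist_commute)
        then show ?thesis using a1 a2 by simp
      qed
      then show "norm (dist (f (\<psi> t)) (\<psi> (Suc t)) - 0) < \<eta>" by simp
    qed
  qed
  obtain y where y: "y \<in> X" "(\<lambda>i. dist (\<psi> i) ((f ^^ i) y)) \<longlonglongrightarrow> 0"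
    using ls \<psi>X asy unfolding limit_shadowing_def by blast
  obtain T1 where T1: "\<forall>t\<ge>T1. dist (\<psi> t) ((f ^^ t) y) < \<epsilon>"
    using y(2) e unfolding LIMSEQ_iff by (metis abs_of_nonneg zero_le_dist real_norm_def diff_zero)
  define z where "z = (f^^(T T1)) y"
  have zX: "z \<in> X" using fp_in y(1) z_def by simp
  obtain i where i: "i < p (\<sigma> T1)" "dist (q (\<sigma> T1) i) ((f^^i) z) > \<epsilon>" using qns[OF zX] by blast
  have "\<psi> (T T1 + i) = q (\<sigma> T1) i" using \<psi>k i(1) L_def by simp
  moreover have "T T1 + i \<ge> T1" using Tge[of T1] by simp
  ultimately have "dist (q (\<sigma> T1) i) ((f^^(T T1 + i)) y) < \<epsilon>" using T1 by metis
  then show False using i(2) by (simp add: z_def fp_add)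
qed

end


lemma card_window_le:
  assumes "\<not> {j..j+L} \<subseteq> A"
  shows "card (A \<inter> {j..<j+Suc L}) \<le> L"
proof -
  obtain x where x: "x \<in> {j..j+L}" "x \<notin> A" using assms by blast
  have "A \<inter> {j..<j+Suc L} \<subseteq> {j..<j+Suc L} - {x}" using x by auto
  then have "card (A \<inter> {j..<j+Suc L}) \<le> card ({j..<j+Suc L} - {x})" by (intro card_mono) auto
  also have "\<dots> = L" using x by simp
  finally show ?thesis .
qed

lemma density_thick:
  assumes d: "density_one A"
  shows "\<exists>j. {j..j+L} \<subseteq> A"
proof (rule ccontr)
  assume "\<not> ?thesis"
  then have nw: "\<forall>j. \<not> {j..j+L} \<subseteq> A" by blast
  define W where "W = Suc L"
  have cm: "card (A \<inter> {..<m*W}) \<le> m*L" for m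
  proof (induction m)
    case 0 then show ?case by simp
  next
    case (Suc m)
    have "{..<Suc m * W} = {..<m*W} \<union> {m*W..<m*W + Suc L}" by (auto simp: W_def)
    then have "A \<inter> {..<Suc m * W} = (A \<inter> {..<m*W}) \<union> (A \<inter> {m*W..<m*W + Suc L})" by auto
    then have "card (A \<inter> {..<Suc m * W}) \<le> card (A \<inter> {..<m*W}) + card (A \<inter> {m*W..<m*W + Suc L})"
      by (metis card_Un_le)
    also have "\<dots> \<le> m*L + L" using Suc card_window_le[OF nw[rule_format, of "m*W"]] by linarith
    finally show ?case by simp
  qed
  obtain N where N: "\<forall>n\<ge>N. norm (real (card (A \<inter> {..<n})) / real n - 1) < 1 / (2 * real W)"
    using d unfolding density_one_def LIMSEQ_iff by (metis W_def of_nat_0_less_iff zero_less_Suc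
        divide_pos_pos mult_pos_pos zero_less_numeral zero_less_one)
  define n where "n = Suc N * W"
  have nN: "n \<ge> N" unfolding n_def W_def by simp
  have "n > 0" unfolding n_def W_def by simp
  then have npos: "real n > 0" by simp
  have "card (A \<inter> {..<n}) \<le> Suc N * L" using cm[of "Suc N"] n_def by simp
  then have "real (card (A \<inter> {..<n})) \<le> real (Suc N * L)" by (simp only: of_nat_le_iff)
  then have r1: "real (card (A \<inter> {..<n})) / real n \<le> real (Suc N * L) / real n"
    using npos by (simp add: divide_right_mono)
  have r2: "real (Suc N * L) / real n = real L / real W" unfolding n_def of_nat_mult
    by (rule mult_divide_mult_cancel_left) simp
  have "real L / real W = 1 - 1 / real W" unfolding W_def by (simp add: field_simps)
  then have "real (card (A \<inter> {..<n})) / real n \<le> 1 - 1 / real W" using r1 r2 by simp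
  moreover have "1 / (2 * real W) < 1 / real W" unfolding W_def by (simp add: field_simps)
  ultimately have "norm (real (card (A \<inter> {..<n})) / real n - 1) \<ge> 1 / (2 * real W)" by simp
  then show False using N nN by (meson not_le)
qed

lemma pig_runs:
  assumes fin: "finite K"
    and runs: "\<forall>k. \<exists>j L. R j L \<and> k \<le> card {t\<in>{j..j+L}. P t}"
    and kap: "\<forall>t. P t \<longrightarrow> \<kappa> t \<in> K"
  shows "\<exists>v\<in>K. \<forall>k. \<exists>j L. R j L \<and> k \<le> card {t\<in>{j..j+L}. P t \<and> \<kappa> t = v}"
proof -
  have "\<forall>n. \<exists>v. v \<in> K \<and> (\<exists>j L. R j L \<and> n \<le> card {t\<in>{j..j+L}. P t \<and> \<kappa> t = v})"
  proof
    fix n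
    obtain j L where jL: "R j L" "card K * n + 1 \<le> card {t\<in>{j..j+L}. P t}" using runs by blast
    define S where "S = {t\<in>{j..j+L}. P t}"
    have "\<exists>v\<in>K. n \<le> card {t\<in>S. \<kappa> t = v}"
    proof (rule ccontr)
      assume "\<not> ?thesis"
      then have lt: "\<forall>v\<in>K. card {t\<in>S. \<kappa> t = v} < n" by auto
      have SU: "S = (\<Union>v\<in>K. {t\<in>S. \<kappa> t = v})" using kap S_def by auto
      have "card (\<Union>v\<in>K. {t\<in>S. \<kappa> t = v}) \<le> (\<Sum>v\<in>K. card {t\<in>S. \<kappa> t = v})"
        by (rule card_UN_le[OF fin])
      then have "card S \<le> (\<Sum>v\<in>K. card {t\<in>S. \<kappa> t = v})" using SU by simp
      moreover have "K \<noteq> {}"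
      proof
        assume "K = {}"
        then have "S = {}" using kap S_def by auto
        then show False using jL(2)[folded S_def] by simp
      qed
      then have "(\<Sum>v\<in>K. card {t\<in>S. \<kappa> t = v}) < (\<Sum>v\<in>K. n)" using lt fin by (intro sum_strict_mono) auto
      ultimately have "card S < card K * n" by simp
      then show False using jL(2)[folded S_def] by simp
    qed
    then show "\<exists>v. v \<in> K \<and> (\<exists>j L. R j L \<and> n \<le> card {t\<in>{j..j+L}. P t \<and> \<kappa> t = v})"
      using jL(1) S_def by auto
  qed
  then obtain V where V: "\<forall>n. V n \<in> K \<and> (\<exists>j L. R j L \<and> n \<le> card {t\<in>{j..j+L}. P t \<and> \<kappa> t = V n})"
    using choice[of "\<lambda>n v. v \<in> K \<and> (\<exists>j L. R j L \<and> n \<le> card {t\<in>{j..j+L}. P t \<and> \<kappa> t = v})"] by blast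
  have "V ` UNIV \<subseteq> K" using V by blast
  then have "finite (V ` UNIV)" using fin finite_subset by blast
  then obtain n0 where inf: "infinite {n. V n = V n0}"
    using pigeonhole_infinite[of "UNIV :: nat set" V] by auto
  show ?thesis
  proof (intro bexI[of _ "V n0"] allI)
    show "V n0 \<in> K" using V by blast
    fix k
    obtain n where n: "n \<ge> k" "V n = V n0" using inf unfolding infinite_nat_iff_unbounded_le by blast
    obtain j L where "R j L" "n \<le> card {t\<in>{j..j+L}. P t \<and> \<kappa> t = V n}" using V by blast
    then show "\<exists>j L. R j L \<and> k \<le> card {t\<in>{j..j+L}. P t \<and> \<kappa> t = V n0}"
      using n by (intro exI[of _ j] exI[of _ L]) auto
  qed
qed



lemma card_le_maxmin:
  assumes "finite (V::nat set)" "V \<noteq> {}"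
  shows "card V \<le> Suc (Max V - Min V)"
proof -
  have "V \<subseteq> {Min V..Max V}" using assms by auto
  then have "card V \<le> card {Min V..Max V}" by (intro card_mono) auto
  then show ?thesis by simp
qed

lemma mod_fix:
  assumes "a mod l = (\<rho>::nat)" "\<rho> < l"
  shows "(a + (l - \<rho>) mod l) mod l = 0"
proof -
  have "(a + (l - \<rho>) mod l) mod l = (a + (l - \<rho>)) mod l" by (rule mod_add_right_eq)
  also have "\<dots> = (a mod l + (l - \<rho>)) mod l" by (rule mod_add_left_eq[symmetric])
  also have "\<dots> = (\<rho> + (l - \<rho>)) mod l" using assms by simp
  also have "\<dots> = 0" using assms by simp
  finally show ?thesis .
qed

context dyn begin

lemma PS_thick:
  assumes U: "\<forall>\<epsilon>>0. \<exists>\<delta>>0. PS X f \<epsilon> \<delta>"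
  shows "thick_shadowing X f"
  unfolding thick_shadowing_def
proof (intro allI impI)
  fix \<epsilon> :: real assume e: "\<epsilon> > 0"
  obtain \<delta>U where dU: "\<delta>U > 0" "PS X f \<epsilon> \<delta>U" using U e by blast
  define \<delta> where "\<delta> = \<delta>U/2"
  define rr where "rr = \<delta>U/4"
  have "\<forall>x. (\<forall>i. x i \<in> X) \<and> density_one {i. dist (f (x i)) (x (Suc i)) \<le> \<delta>} \<longrightarrow>
      (\<exists>z\<in>X. thick {i. dist (x i) ((f ^^ i) z) \<le> \<epsilon>})"
  proof (intro allI impI)
    fix x :: "nat \<Rightarrow> 'a"
    assume H: "(\<forall>i. x i \<in> X) \<and> density_one {i. dist (f (x i)) (x (Suc i)) \<le> \<delta>}"
    define A where "A = {i. dist (f (x i)) (x (Suc i)) \<le> \<delta>}"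
    have xX: "\<And>i. x i \<in> X" using H by blast
    have dA: "density_one A" using H A_def by simp
    have rr0: "rr > 0" using dU rr_def by simp
    obtain C where C: "C \<subseteq> X" "finite C" "X \<subseteq> (\<Union>c\<in>C. ball c rr)"
      using compactE_image[OF cpt, of X "\<lambda>c. ball c rr"] rr0 by (metis centre_in_ball open_ball UN_I subsetI)
    have "\<forall>t. \<exists>c. c \<in> C \<and> dist c (x t) < rr" using C(3) xX by fastforce
    then obtain cen where cen: "\<And>t. cen t \<in> C" "\<And>t. dist (cen t) (x t) < rr" by metis
    define R where "R j L \<longleftrightarrow> 1 \<le> j \<and> {j..j+L} \<subseteq> A" for j L
    have runs0: "\<forall>k. \<exists>j L. R j L \<and> k \<le> card {t\<in>{j..j+L}. True}"
    proof
      fix k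
      obtain j0 where "{j0..j0+Suc k} \<subseteq> A" using density_thick[OF dA] by blast
      then have "R (Suc j0) k" unfolding R_def by auto
      moreover have "{t\<in>{Suc j0..Suc j0+k}. True} = {Suc j0..Suc j0+k}" by auto
      ultimately have "R (Suc j0) k \<and> k \<le> card {t\<in>{Suc j0..Suc j0+k}. True}" by (simp only:) simp
      then show "\<exists>j L. R j L \<and> k \<le> card {t\<in>{j..j+L}. True}" by blast
    qed
    obtain c where c: "c \<in> C" "\<forall>k. \<exists>j L. R j L \<and> k \<le> card {t\<in>{j..j+L}. True \<and> cen t = c}"
      using pig_runs[OF C(2) runs0, of cen] cen(1) by blast
    have vis: "cen a = c \<Longrightarrow> cen b = c \<Longrightarrow> dist (x a) (x b) < \<delta>U/2" for a b
      using cen(2)[of a] cen(2)[of b] dist_triangle[of "x a" "x b" c] unfolding rr_def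
      by (simp add: dist_commute)
    have jump: "t \<in> A \<Longrightarrow> cen (Suc t) = c \<Longrightarrow> cen b = c \<Longrightarrow> dist (f (x t)) (x b) \<le> \<delta>U" for t b
    proof -
      assume a: "t \<in> A" "cen (Suc t) = c" "cen b = c"
      have "dist (f (x t)) (x (Suc t)) \<le> \<delta>" using a(1) A_def by simp
      moreover have "dist (x (Suc t)) (x b) < \<delta>U/2" using vis a by simp
      ultimately show ?thesis using dist_triangle[of "f (x t)" "x b" "x (Suc t)"] \<delta>_def by simp
    qed
    
    obtain j1 L1 where jL1: "R j1 L1" "2 \<le> card {t\<in>{j1..j1+L1}. True \<and> cen t = c}" using c(2) by blast
    define V1 where "V1 = {t\<in>{j1..j1+L1}. True \<and> cen t = c}"
    have c2: "2 \<le> card V1" using jL1(2) unfolding V1_def .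
    have V1f: "finite V1" "V1 \<noteq> {}" using c2 by (simp add: V1_def, intro notI, simp)
    define b0 where "b0 = Min V1"
    define b1 where "b1 = Max V1"
    have b0V: "b0 \<in> V1" and b1V: "b1 \<in> V1" using V1f b0_def b1_def by auto
    have b01: "b0 < b1"
    proof -
      have "2 \<le> Suc (b1 - b0)" using card_le_maxmin[OF V1f] jL1(2) V1_def b0_def b1_def by simp
      then show ?thesis by simp
    qed
    define l where "l = b1 - b0"
    have l0: "0 < l" using b01 l_def by simp
    have cb: "cen b0 = c" "cen b1 = c" using b0V b1V V1_def by auto
    have Ab: "t \<in> A" if "b0 \<le> t" "t < b1" for t
      using that jL1(1) b0V b1V V1_def unfolding R_def by auto
    obtain \<rho> where rho: "\<rho> \<in> {..<l}" "\<forall>k. \<exists>j L. R j L \<and> k \<le> card {t\<in>{j..j+L}. (True \<and> cen t = c) \<and> t mod l = \<rho>}"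
      using pig_runs[of "{..<l}" R "\<lambda>t. True \<and> cen t = c" "\<lambda>t. t mod l"] c(2) l0 by auto
    have "\<forall>n. \<exists>s s'. 1 \<le> s \<and> s + n + 1 \<le> s' \<and> s mod l = \<rho> \<and> s' mod l = \<rho> \<and> cen s = c \<and> cen s' = c
              \<and> (\<forall>t. s \<le> t \<and> t < s' \<longrightarrow> t \<in> A)"
    proof
      fix n
      obtain j L where jL: "R j L" "n + 2 \<le> card {t\<in>{j..j+L}. (True \<and> cen t = c) \<and> t mod l = \<rho>}"
        using rho(2) by blast
      define V where "V = {t\<in>{j..j+L}. (True \<and> cen t = c) \<and> t mod l = \<rho>}"
      have c3: "n + 2 \<le> card V" using jL(2) unfolding V_def .
      have Vf: "finite V" "V \<noteq> {}" using c3 by (simp add: V_def, intro notI, simp)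
      have sV: "Min V \<in> V" and s'V: "Max V \<in> V" using Vf by auto
      have "n + 2 \<le> Suc (Max V - Min V)" using card_le_maxmin[OF Vf] jL(2) V_def by simp
      then have "Min V + n + 1 \<le> Max V" by simp
      moreover have "\<forall>t. Min V \<le> t \<and> t < Max V \<longrightarrow> t \<in> A"
        using sV s'V jL(1) V_def unfolding R_def by auto
      moreover have "1 \<le> Min V" using sV jL(1) V_def unfolding R_def by auto
      ultimately show "\<exists>s s'. 1 \<le> s \<and> s + n + 1 \<le> s' \<and> s mod l = \<rho> \<and> s' mod l = \<rho> \<and> cen s = c \<and> cen s' = c
              \<and> (\<forall>t. s \<le> t \<and> t < s' \<longrightarrow> t \<in> A)"
        using sV s'V V_def by (intro exI[of _ "Min V"] exI[of _ "Max V"]) auto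
    qed
    then obtain s s' where ss: "\<And>n. 1 \<le> s n" "\<And>n. s n + n + 1 \<le> s' n" "\<And>n. s n mod l = \<rho>" "\<And>n. s' n mod l = \<rho>"
       "\<And>n. cen (s n) = c" "\<And>n. cen (s' n) = c" "\<And>n t. s n \<le> t \<Longrightarrow> t < s' n \<Longrightarrow> t \<in> A"
      by metis
    define h where "h = (l - \<rho>) mod l"
    have hs: "(s n + h) mod l = 0" "(s' n + h) mod l = 0" for n
      using mod_fix[OF ss(3)] mod_fix[OF ss(4)] rho(1) h_def by auto
    define inb where "inb u \<longleftrightarrow> (\<exists>n. s n + h \<le> u \<and> u < s' n + h)" for u
    define \<phi> where "\<phi> u = (if inb u then x (u - h) else x (b0 + u mod l))" for u
    have \<phi>X: "\<forall>u. \<phi> u \<in> X" using xX \<phi>_def by simp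
    have cyc: "b0 + u mod l < b1" for u
    proof -
      have "u mod l < l" using l0 by simp
      then show ?thesis using l_def b01 by linarith
    qed
    have wrapS: "Suc (b1 - 1) = b1" "b0 \<le> b1 - 1" "b1 - 1 < b1" using b01 by auto
    have wrap: "dist (f (x (b1 - 1))) (x b) \<le> \<delta>U" if "cen b = c" for b
      using jump[of "b1 - 1" b] Ab[OF wrapS(2,3)] wrapS(1) cb(2) that by simp
    have ex: "dist (f (x (s' n - 1))) (x b) \<le> \<delta>U" if "cen b = c" for n b
    proof -
      have "s n \<le> s' n - 1" "s' n - 1 < s' n" "Suc (s' n - 1) = s' n" using ss(2)[of n] by auto
      then show ?thesis using jump[of "s' n - 1" b] ss(7) ss(6) that by simp
    qed
    have step: "\<forall>u. dist (f (\<phi> u)) (\<phi> (Suc u)) \<le> \<delta>U"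
    proof
      fix u
      show "dist (f (\<phi> u)) (\<phi> (Suc u)) \<le> \<delta>U"
      proof (cases "inb u")
        case True
        then obtain n where n: "s n + h \<le> u" "u < s' n + h" unfolding inb_def by blast
        show ?thesis
        proof (cases "inb (Suc u)")
          case True
          have "u - h \<in> A" using ss(7)[of n "u-h"] n by simp
          moreover have "Suc u - h = Suc (u - h)" using n by simp
          ultimately show ?thesis using \<open>inb u\<close> True \<phi>_def A_def \<delta>_def dU(1) by simp
        next
          case False
          then have "\<not> Suc u < s' n + h" using n unfolding inb_def by auto
          then have su: "Suc u = s' n + h" using n by simp
          have "\<phi> (Suc u) = x b0" using False hs(2)[of n] su \<phi>_def by simp
          moreover have "u - h = s' n - 1" using su ss(2)[of n] by linarith
          then have "\<phi> u = x (s' n - 1)" using \<open>inb u\<close> \<phi>_def by simp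
          ultimately show ?thesis using ex[OF cb(1)] by simp
        qed
      next
        case False
        show ?thesis
        proof (cases "inb (Suc u)")
          case True
          then obtain m where m: "s m + h \<le> Suc u" "Suc u < s' m + h" unfolding inb_def by blast
          have "\<not> (s m + h \<le> u)"
          proof
            assume "s m + h \<le> u"
            then have "inb u" unfolding inb_def using m by (intro exI[of _ m]) simp
            with False show False by simp
          qed
          then have su: "Suc u = s m + h" using m(1) by linarith
          have S0: "Suc u mod l = 0" using hs(1)[of m] su by simp
          have "Suc (u mod l) = l"
          proof (rule ccontr)
            assume "Suc (u mod l) \<noteq> l"
            then have "Suc u mod l = Suc (u mod l)" by (simp add: mod_Suc)
            with S0 show False by simp
          qed
          then have "u mod l = l - 1" by simp
          then have "\<phi> u = x (b1 - 1)" using False \<phi>_def l_def b01 by simp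
          moreover have "\<phi> (Suc u) = x (s m)" using True su \<phi>_def by simp
          ultimately show ?thesis using wrap[OF ss(5)] by simp
        next
          case True2: False
          show ?thesis
          proof (cases "Suc (u mod l) = l")
            case True
            then have "Suc u mod l = 0" by (simp add: mod_Suc)
            moreover have "u mod l = l - 1" using True by simp
            ultimately have "\<phi> u = x (b1 - 1)" "\<phi> (Suc u) = x b0"
              using False True2 \<phi>_def l_def b01 by auto
            then show ?thesis using wrap[OF cb(1)] by simp
          next
            case F3: False
            then have "Suc u mod l = Suc (u mod l)" by (simp add: mod_Suc)
            then have "\<phi> (Suc u) = x (Suc (b0 + u mod l))" using True2 \<phi>_def by simp
            moreover have "\<phi> u = x (b0 + u mod l)" using False \<phi>_def by simp
            moreover have "b0 + u mod l \<in> A" using Ab cyc by simp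
            ultimately show ?thesis using A_def \<delta>_def dU(1) by simp
          qed
        qed
      qed
    qed
    have ret: "\<forall>N. \<exists>T\<ge>N. 0<T \<and> dist (f (\<phi> (T-1))) (\<phi> 0) \<le> \<delta>U"
    proof
      fix N
      define T where "T = s' N + h"
      have T1: "T \<ge> N" "0 < T" using ss(2)[of N] T_def by auto
      have "inb (T - 1)" unfolding inb_def T_def using ss(2)[of N] by (intro exI[of _ N]) auto
      then have "\<phi> (T - 1) = x (s' N - 1)" using ss(2)[of N] \<phi>_def T_def by simp
      moreover have "\<not> inb 0"
      proof
        assume "inb 0"
        then obtain n where "s n + h \<le> 0" unfolding inb_def by blast
        with ss(1)[of n] show False by simp
      qed
      then have "\<phi> 0 = x b0" using \<phi>_def by simp
      ultimately have "dist (f (\<phi> (T-1))) (\<phi> 0) \<le> \<delta>U" using ex[OF cb(1), of N] by simp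
      then show "\<exists>T\<ge>N. 0<T \<and> dist (f (\<phi> (T-1))) (\<phi> 0) \<le> \<delta>U"
        using T1 by blast
    qed
    obtain z where z: "z \<in> X" "\<forall>u. dist (\<phi> u) ((f^^u) z) \<le> \<epsilon>"
      using lemmaS[OF dU(2) \<phi>X step ret] by blast
    show "\<exists>z\<in>X. thick {i. dist (x i) ((f ^^ i) z) \<le> \<epsilon>}"
    proof (intro bexI[of _ "(f^^h) z"])
      show "(f^^h) z \<in> X" using fp_in z by blast
      show "thick {i. dist (x i) ((f ^^ i) ((f ^^ h) z)) \<le> \<epsilon>}" unfolding thick_def
      proof
        fix n
        have "{s n..s n + n} \<subseteq> {i. dist (x i) ((f ^^ i) ((f ^^ h) z)) \<le> \<epsilon>}"
        proof
          fix i assume i: "i \<in> {s n..s n + n}"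
          then have "inb (i + h)" unfolding inb_def using ss(2)[of n] by (intro exI[of _ n]) auto
          then have "\<phi> (i + h) = x i" using \<phi>_def by simp
          then have "dist (x i) ((f^^(i+h)) z) \<le> \<epsilon>" using z(2)[rule_format, of "i+h"] by simp
          then show "i \<in> {i. dist (x i) ((f ^^ i) ((f ^^ h) z)) \<le> \<epsilon>}" by (simp add: fp_add add.commute)
        qed
        then show "\<exists>j. {j..j + n} \<subseteq> {i. dist (x i) ((f ^^ i) ((f ^^ h) z)) \<le> \<epsilon>}" by blast
      qed
    qed
  qed
  then show "\<exists>\<delta>>0. \<forall>x. (\<forall>i. x i \<in> X) \<and> density_one {i. dist (f (x i)) (x (Suc i)) \<le> \<delta>} \<longrightarrow>
      (\<exists>z\<in>X. thick {i. dist (x i) ((f ^^ i) z) \<le> \<epsilon>})" using dU \<delta>_def by (intro exI[of _ \<delta>]) auto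
qed

end


context dyn begin

lemma U_limit:
  assumes U: "\<forall>\<epsilon>>0. \<exists>\<delta>>0. PS X f \<epsilon> \<delta>" and Hyp: "c_expansive X f \<or> equicontinuous X f"
    and xX: "\<forall>i. x i \<in> X" and asy: "(\<lambda>i. dist (f (x i)) (x (Suc i))) \<longlonglongrightarrow> 0"
  shows "\<exists>y\<in>nonwandering X f. (\<lambda>t. dist (x t) ((f^^t) y)) \<longlonglongrightarrow> 0"
proof -
  have T: "\<forall>\<epsilon>>0. \<exists>N. \<exists>w\<in>nonwandering X f. \<forall>t\<ge>N. dist (x t) ((f^^t) w) \<le> \<epsilon>"
    using PS_tail[OF U xX asy] by blast
  show ?thesis using Hyp cexp_final[OF _ T] eq_final[OF _ T] by blast
qed

end

theorem corollary1p3: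
  fixes X :: "'a::metric_space set" and f :: "'a \<Rightarrow> 'a"
  assumes "compact X"
    and "continuous_on X f" and "f ` X \<subseteq> X"
    and "c_expansive X f \<or> equicontinuous X f"
  shows "(limit_shadowing X f \<longrightarrow> limit_shadowing (nonwandering X f) f)
    \<and> (limit_shadowing X f \<longleftrightarrow> thick_shadowing X f)"
proof -
  interpret dyn X f using assms(1-3) by unfold_locales
  have p1: "limit_shadowing (nonwandering X f) f" if ls: "limit_shadowing X f"
  proof -
    have U: "\<forall>\<epsilon>>0. \<exists>\<delta>>0. PS X f \<epsilon> \<delta>" using limit_PS[OF ls] by blast
    show ?thesis unfolding limit_shadowing_def
    proof (intro allI impI)
      fix x :: "nat \<Rightarrow> 'a"
      assume "(\<forall>i. x i \<in> nonwandering X f) \<and> (\<lambda>i. dist (f (x i)) (x (Suc i))) \<longlonglongrightarrow> 0"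
      then show "\<exists>y\<in>nonwandering X f. (\<lambda>i. dist (x i) ((f ^^ i) y)) \<longlonglongrightarrow> 0"
        using U_limit[OF U assms(4)] nw_sub by blast
    qed
  qed
  have p2: "thick_shadowing X f" if ls: "limit_shadowing X f"
    using PS_thick limit_PS[OF ls] by blast
  have p3: "limit_shadowing X f" if th: "thick_shadowing X f"
  proof -
    have U: "\<forall>\<epsilon>>0. \<exists>\<delta>>0. PS X f \<epsilon> \<delta>" using thick_PS[OF th] by blast
    show ?thesis unfolding limit_shadowing_def
    proof (intro allI impI)
      fix x :: "nat \<Rightarrow> 'a"
      assume "(\<forall>i. x i \<in> X) \<and> (\<lambda>i. dist (f (x i)) (x (Suc i))) \<longlonglongrightarrow> 0"
      then show "\<exists>y\<in>X. (\<lambda>i. dist (x i) ((f ^^ i) y)) \<longlonglongrightarrow> 0"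
        using U_limit[OF U assms(4)] nw_sub by blast
    qed
  qed
  show ?thesis using p1 p2 p3 by blast
qed


end
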